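(* Let $k\ge 2$, let $H$ be a digraph (possibly with loops), and let $D$ be an $H$-colored local in-tournament. If every directed cycle in $D$ has $H$-length at most $k-2$, then $D$ has a $(k,H)$-kernel.
   Context: All digraphs are finite. A local in-tournament is a digraph $D$ such that for every vertex $x$, the subdigraph induced by the in-neighbourhood $N^-(x)$ is a tournament (every two distinct vertices joined by exactly one arc). $D$ has no loops and comes with a map $\rho: A(D)\to V(H)$. For a walk $W=(x_0,\ldots,x_n)$ in $D$, there is an obstruction on $x_i$ if $(\rho(x_{i-1},x_i),\rho(x_i,x_{i+1})) \notin A(H)$; for an open walk this is considered at internal vertices $x_i$, $1\le i\le n-1$, for a closed walk (such as a cycle) at all $i\in\{0,\ldots,n-1\}$ with indices modulo $n$. $O_H(W)$ is the set of indices with an obstruction; the $H$-length is $l_H(W)=|O_H(W)|+1$ for open $W$ and $|O_H(W)|$ for closed $W$. A $(k,H)$-kernel ($k\ge2$) is a set $S\subseteq V(D)$ such that for every two distinct $u,v\in S$ every directed $uv$-path in $D$ has $H$-length at least $k$, and for every $x\in V(D)\setminus S$ there is a directed path from $x$ to a vertex of $S$ of $H$-length at most $k-1$. *)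

theory Defs
  imports Main
begin

definition digraph :: "'a set \<Rightarrow> ('a \<times> 'a) set \<Rightarrow> bool" where
  "digraph V A \<longleftrightarrow> finite V \<and> A \<subseteq> V \<times> V"

definition loopless :: "('a \<times> 'a) set \<Rightarrow> bool" where
  "loopless A \<longleftrightarrow> (\<forall>x. (x, x) \<notin> A)"

definition in_nbrs :: "('a \<times> 'a) set \<Rightarrow> 'a \<Rightarrow> 'a set" where
  "in_nbrs A x = {y. (y, x) \<in> A}"

definition local_in_tournament :: "'a set \<Rightarrow> ('a \<times> 'a) set \<Rightarrow> bool" where
  "local_in_tournament V A \<longleftrightarrow>
     (\<forall>x\<in>V. \<forall>u\<in>in_nbrs A x. \<forall>v\<in>in_nbrs A x. u \<noteq> v \<longrightarrow>
        ((u, v) \<in> A \<longleftrightarrow> (v, u) \<notin> A))"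

definition H_colouring :: "('a \<times> 'a) set \<Rightarrow> 'b set \<Rightarrow> ('a \<times> 'a \<Rightarrow> 'b) \<Rightarrow> bool" where
  "H_colouring A VH rho \<longleftrightarrow> (\<forall>e\<in>A. rho e \<in> VH)"

definition dpath :: "('a \<times> 'a) set \<Rightarrow> 'a list \<Rightarrow> bool" where
  "dpath A xs \<longleftrightarrow> xs \<noteq> [] \<and> distinct xs \<and>
     (\<forall>i. Suc i < length xs \<longrightarrow> (xs ! i, xs ! Suc i) \<in> A)"

definition dcycle :: "('a \<times> 'a) set \<Rightarrow> 'a list \<Rightarrow> bool" where
  "dcycle A xs \<longleftrightarrow> xs \<noteq> [] \<and> distinct xs \<and>
     (\<forall>i < length xs. (xs ! i, xs ! ((i + 1) mod length xs)) \<in> A)"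

definition obs_open :: "('b \<times> 'b) set \<Rightarrow> ('a \<times> 'a \<Rightarrow> 'b) \<Rightarrow> 'a list \<Rightarrow> nat set" where
  "obs_open AH rho xs = {i. 1 \<le> i \<and> Suc i < length xs \<and>
      (rho (xs ! (i - 1), xs ! i), rho (xs ! i, xs ! Suc i)) \<notin> AH}"

definition H_length_open :: "('b \<times> 'b) set \<Rightarrow> ('a \<times> 'a \<Rightarrow> 'b) \<Rightarrow> 'a list \<Rightarrow> nat" where
  "H_length_open AH rho xs = card (obs_open AH rho xs) + 1"

definition obs_closed :: "('b \<times> 'b) set \<Rightarrow> ('a \<times> 'a \<Rightarrow> 'b) \<Rightarrow> 'a list \<Rightarrow> nat set" where
  "obs_closed AH rho xs = (let n = length xs in {i. i < n \<and>
      (rho (xs ! ((i + n - 1) mod n), xs ! i), rho (xs ! i, xs ! ((i + 1) mod n))) \<notin> AH})"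

definition H_length_closed :: "('b \<times> 'b) set \<Rightarrow> ('a \<times> 'a \<Rightarrow> 'b) \<Rightarrow> 'a list \<Rightarrow> nat" where
  "H_length_closed AH rho xs = card (obs_closed AH rho xs)"

definition kH_kernel :: "nat \<Rightarrow> 'a set \<Rightarrow> ('a \<times> 'a) set \<Rightarrow> ('b \<times> 'b) set \<Rightarrow>
    ('a \<times> 'a \<Rightarrow> 'b) \<Rightarrow> 'a set \<Rightarrow> bool" where
  "kH_kernel k V A AH rho S \<longleftrightarrow> S \<subseteq> V \<and>
     (\<forall>u\<in>S. \<forall>v\<in>S. u \<noteq> v \<longrightarrow>
        (\<forall>xs. dpath A xs \<and> hd xs = u \<and> last xs = v \<longrightarrow> H_length_open AH rho xs \<ge> k)) \<and>
     (\<forall>x\<in>V - S. \<exists>xs. dpath A xs \<and> hd xs = x \<and> last xs \<in> S \<and>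
        H_length_open AH rho xs \<le> k - 1)"

end

theory Submission
  imports Defs
begin

definition cyc :: "('a \<times> 'a) set \<Rightarrow> 'a list \<Rightarrow> bool" where
  "cyc A xs \<longleftrightarrow> xs \<noteq> [] \<and> distinct xs \<and> successively (\<lambda>a b. (a,b) \<in> A) xs \<and> (last xs, hd xs) \<in> A"

lemma dcycle_cyc: "dcycle A xs \<longleftrightarrow> cyc A xs"
proof
  assume d: "dcycle A xs"
  then have ne: "xs \<noteq> []" and dis: "distinct xs" and ar: "\<forall>i < length xs. (xs ! i, xs ! ((i + 1) mod length xs)) \<in> A"
    unfolding dcycle_def by auto
  have "successively (\<lambda>a b. (a,b) \<in> A) xs"
    unfolding successively_conv_nth
  proof (intro allI impI)
    fix i assume "Suc i < length xs"
    then show "(xs ! i, xs ! Suc i) \<in> A" using ar[rule_format, of i] by simp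
  qed
  moreover have "(last xs, hd xs) \<in> A"
  proof -
    have "length xs - 1 < length xs" using ne by simp
    from ar[rule_format, OF this] have "(xs ! (length xs - 1), xs ! 0) \<in> A" using ne by simp
    then show ?thesis using ne by (simp add: last_conv_nth hd_conv_nth)
  qed
  ultimately show "cyc A xs" using ne dis unfolding cyc_def by auto
next
  assume c: "cyc A xs"
  then have ne: "xs \<noteq> []" and dis: "distinct xs" and s: "successively (\<lambda>a b. (a,b) \<in> A) xs"
    and cl: "(last xs, hd xs) \<in> A" unfolding cyc_def by auto
  have "\<forall>i < length xs. (xs ! i, xs ! ((i + 1) mod length xs)) \<in> A"
  proof (intro allI impI)
    fix i assume i: "i < length xs"
    show "(xs ! i, xs ! ((i + 1) mod length xs)) \<in> A"
    proof (cases "Suc i < length xs")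
      case True then show ?thesis using successively_nth[OF s True] by simp
    next
      case False
      then have "i = length xs - 1" "Suc i = length xs" using i by auto
      then have "i = length xs - 1" "(i+1) mod length xs = 0" by auto
      then show ?thesis using cl ne by (simp add: last_conv_nth hd_conv_nth)
    qed
  qed
  then show "dcycle A xs" using ne dis unfolding dcycle_def by auto
qed

lemma cyc_rotate1: "cyc A xs \<Longrightarrow> cyc A (rotate1 xs)"
proof -
  assume c: "cyc A xs"
  then obtain a t where xs: "xs = a # t" unfolding cyc_def by (cases xs) auto
  show ?thesis
  proof (cases "t = []")
    case True then show ?thesis using c xs by simp
  next
    case False
    from c xs have "successively (\<lambda>a b. (a,b) \<in> A) t" "(a, hd t) \<in> A" "(last t, a) \<in> A" "distinct (a#t)"
      using False unfolding cyc_def by (auto simp: successively_Cons)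
    then show ?thesis using xs False unfolding cyc_def by (auto simp: successively_append_iff)
  qed
qed

lemma cyc_rotate: "cyc A xs \<Longrightarrow> cyc A (rotate n xs)"
  by (induction n) (auto intro: cyc_rotate1)

lemma cyc_rot_last:
  assumes "cyc A xs" "c \<in> set xs"
  shows "\<exists>ys. cyc A ys \<and> set ys = set xs \<and> last ys = c"
proof -
  obtain i where i: "i < length xs" "xs ! i = c" using assms(2) by (metis in_set_conv_nth)
  let ?ys = "rotate (Suc i) xs"
  have ne: "xs \<noteq> []" using i by auto
  have "last ?ys = ?ys ! (length xs - 1)" using ne by (simp add: last_conv_nth)
  also have "\<dots> = xs ! ((Suc i + (length xs - 1)) mod length xs)"
    using ne nth_rotate[of "length xs - 1" xs "Suc i"] by (simp del: rotate_Suc)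
  also have "(Suc i + (length xs - 1)) mod length xs = i" using i
    by (metis Suc_pred' add_Suc add_Suc_right length_greater_0_conv mod_add_self2 mod_less ne)
  finally show ?thesis using i assms(1) cyc_rotate[of A xs "Suc i"] by (intro exI[of _ ?ys]) (simp del: rotate_Suc)
qed

lemma cyc_rot_hd:
  assumes "cyc A xs" "c \<in> set xs"
  shows "\<exists>ys. cyc A ys \<and> set ys = set xs \<and> hd ys = c"
proof -
  obtain i where i: "i < length xs" "xs ! i = c" using assms(2) by (metis in_set_conv_nth)
  let ?ys = "rotate i xs"
  have ne: "xs \<noteq> []" using i by auto
  have "hd ?ys = ?ys ! 0" using ne by (simp add: hd_conv_nth)
  also have "\<dots> = xs ! i" using ne i by (simp add: nth_rotate)
  finally show ?thesis using i assms(1) cyc_rotate by (intro exI[of _ ?ys]) auto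
qed

lemma cyc_subset:
  assumes "cyc A xs" "A \<subseteq> V \<times> V" shows "set xs \<subseteq> V"
proof
  fix v assume "v \<in> set xs"
  then obtain i where i: "i < length xs" "xs ! i = v" by (metis in_set_conv_nth)
  have "dcycle A xs" using assms dcycle_cyc by auto
  then have "(xs ! i, xs ! ((i+1) mod length xs)) \<in> A" using i unfolding dcycle_def by auto
  then show "v \<in> V" using assms i by auto
qed

lemma ear:
  assumes LT: "\<forall>x u v. (u,x)\<in>A \<longrightarrow> (v,x)\<in>A \<longrightarrow> u\<noteq>v \<longrightarrow> (u,v)\<in>A \<or> (v,u)\<in>A"
  shows "length us + j = n \<Longrightarrow> cyc A zs \<Longrightarrow> j < length zs \<Longrightarrow> us \<noteq> [] \<Longrightarrow> distinct us \<Longrightarrow>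
    set us \<inter> set zs = {} \<Longrightarrow> (last zs, hd us) \<in> A \<Longrightarrow> successively (\<lambda>a b. (a,b) \<in> A) us \<Longrightarrow>
    (last us, zs ! j) \<in> A \<Longrightarrow> \<exists>c. cyc A c \<and> set zs \<union> set us \<subseteq> set c"
proof (induction n arbitrary: us j zs rule: less_induct)
  case (less n)
  show ?case
  proof (cases j)
    case 0
    have "cyc A (us @ zs)" using less.prems 0 unfolding cyc_def
      by (auto simp: successively_append_iff hd_conv_nth[symmetric] hd_append)
    then show ?thesis by auto
  next
    case (Suc j')
    let ?p = "zs ! j'" and ?u = "last us"
    have pz: "?p \<in> set zs" using less.prems Suc by auto
    have uu: "?u \<in> set us" using less.prems by auto
    have pu: "?p \<noteq> ?u" using pz uu less.prems(6) by auto
    have pa: "(?p, zs ! j) \<in> A" using less.prems Suc unfolding cyc_def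
      by (metis Suc_lessD successively_nth)
    from LT[rule_format, OF pa less.prems(9) pu] show ?thesis
    proof
      assume a: "(?p, ?u) \<in> A"
      let ?zs = "take j zs @ [?u] @ drop j zs"
      have tk: "take j zs \<noteq> []" "drop j zs \<noteq> []" using Suc less.prems by auto
      have lt: "last (take j zs) = ?p" using Suc less.prems by (simp add: take_Suc_conv_app_nth)
      have hdd: "hd (drop j zs) = zs ! j" using less.prems by (simp add: hd_drop_conv_nth)
      have s: "successively (\<lambda>a b. (a,b) \<in> A) zs" using less.prems unfolding cyc_def by auto
      then have "successively (\<lambda>a b. (a,b) \<in> A) (take j zs)" "successively (\<lambda>a b. (a,b) \<in> A) (drop j zs)"
        using successively_append_iff[of _ "take j zs" "drop j zs"] by auto
      moreover have "u \<in> set (take j zs) \<Longrightarrow> u \<in> set zs" for u by (meson in_set_takeD)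
      moreover have "u \<in> set (drop j zs) \<Longrightarrow> u \<in> set zs" for u by (meson in_set_dropD)
      moreover have "distinct (take j zs @ drop j zs)" using less.prems unfolding cyc_def by simp
      moreover have "hd (take j zs) = hd zs" using tk by (simp add: hd_take Suc)
      moreover have "last (drop j zs) = last zs" using tk by simp
      ultimately have st: "successively (\<lambda>a b. (a,b) \<in> A) (take j zs)" "successively (\<lambda>a b. (a,b) \<in> A) (drop j zs)"
        and dtd: "distinct (take j zs @ drop j zs)" and htk: "hd (take j zs) = hd zs" and ldr: "last (drop j zs) = last zs"
        by blast+
      have un: "?u \<notin> set zs" using uu less.prems(6) by auto
      have d: "distinct ?zs" using dtd un
        by (auto dest: in_set_takeD in_set_dropD simp del: append_take_drop_id)
      have sq: "successively (\<lambda>a b. (a,b) \<in> A) ?zs"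
        using st tk lt hdd a less.prems(9) by (simp add: successively_append_iff successively_Cons)
      have cl: "(last zs, hd zs) \<in> A" using less.prems(2) unfolding cyc_def by simp
      have c2: "cyc A ?zs" unfolding cyc_def using d sq tk htk ldr cl by (simp del: distinct_append)
      have setz: "set ?zs = insert ?u (set zs)"
        by (metis Un_insert_right append_Cons append_self_conv2 append_take_drop_id list.simps(15) set_append)
      have lz: "last ?zs = last zs" using tk by simp
      have zj: "?zs ! j = ?u" using less.prems Suc by (simp add: nth_append)
      show ?thesis
      proof (cases "butlast us = []")
        case True
        then have "set us = {?u}" using less.prems
          by (metis append_butlast_last_id append_self_conv2 empty_set list.simps(15))
        then show ?thesis using c2 setz by auto
      next
        case False
        let ?us = "butlast us"
        have us: "us = ?us @ [?u]" using less.prems by simp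
        have "distinct ?us" "?u \<notin> set ?us" using less.prems(5) us
          using distinct_butlast apply blast
        using less.prems(5) us by (metis distinct_append disjoint_iff list.set_intros(1))
        moreover have "set ?us \<inter> set ?zs = {}" using less.prems(6) setz calculation(2)
          by (auto dest: in_set_butlastD)
        moreover have "hd ?us = hd us" using False us by (metis hd_append)
        moreover have "successively (\<lambda>a b. (a,b) \<in> A) ?us" "(last ?us, ?u) \<in> A"
          using less.prems(8) us False successively_append_iff[of _ ?us "[?u]"] by auto
        moreover have "length ?us + j < n" using less.prems by auto
        moreover have "j < length ?zs" using less.prems by simp
        ultimately obtain c where "cyc A c" "set ?zs \<union> set ?us \<subseteq> set c"
          using less.IH[of _ ?us j ?zs] c2 False lz zj less.prems(7) by fastforce
        then show ?thesis using setz us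
          by (metis Un_insert_right Un_subset_iff insert_is_Un list.simps(15) set_append)
      qed
    next
      assume a: "(?u, ?p) \<in> A"
      show ?thesis using less.IH[of _ us j' zs] less.prems a Suc by auto
    qed
  qed
qed

lemma rtrancl_path:
  assumes "(a,b) \<in> R\<^sup>*"
  shows "\<exists>ps. ps \<noteq> [] \<and> hd ps = a \<and> last ps = b \<and> distinct ps \<and>
    successively (\<lambda>x y. (x,y) \<in> R) ps \<and> set ps \<subseteq> insert a (snd ` R)"
  using assms
proof (induction rule: converse_rtrancl_induct)
  case base
  then show ?case by (intro exI[of _ "[b]"]) auto
next
  case (step a a')
  then obtain ps where ps: "ps \<noteq> []" "hd ps = a'" "last ps = b" "distinct ps"
    "successively (\<lambda>x y. (x,y) \<in> R) ps" "set ps \<subseteq> insert a' (snd ` R)" by blast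
  have a'R: "a' \<in> snd ` R" using step(1) by force
  show ?case
  proof (cases "a \<in> set ps")
    case True
    then obtain xs ys where sp: "ps = xs @ a # ys" by (metis split_list)
    have "successively (\<lambda>x y. (x,y) \<in> R) (a # ys)" using ps(5) sp
      by (simp add: successively_append_iff)
    moreover have "last (a # ys) = b" using ps(3) sp by (simp add: last_append)
    moreover have "distinct (a # ys)" using ps(4) sp by simp
    moreover have "set (a # ys) \<subseteq> insert a (snd ` R)" using ps(6) sp a'R by auto
    ultimately show ?thesis by (intro exI[of _ "a # ys"]) auto
  next
    case False
    then show ?thesis using ps step(1) a'R by (intro exI[of _ "a # ps"]) (auto simp: successively_Cons)
  qed
qed

lemma succ_rtrancl:
  "successively (\<lambda>x y. (x,y) \<in> R) ps \<Longrightarrow> ps \<noteq> [] \<Longrightarrow> (hd ps, last ps) \<in> R\<^sup>*"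
proof (induction ps)
  case Nil then show ?case by simp
next
  case (Cons a ps)
  then show ?case
    by (cases ps) (auto simp: successively_Cons intro: converse_rtrancl_into_rtrancl)
qed

definition Aout :: "('a \<times> 'a) set \<Rightarrow> 'a set \<Rightarrow> ('a \<times> 'a) set" where
  "Aout A C = {(p,q). (p,q) \<in> A \<and> p \<notin> C \<and> q \<notin> C}"

lemma exit_arc:
  assumes "(a,b) \<in> A\<^sup>*" "a \<in> C" "b \<notin> C"
  shows "\<exists>c u. c \<in> C \<and> u \<notin> C \<and> (c,u) \<in> A \<and> (u,b) \<in> (Aout A C)\<^sup>*"
  using assms
proof (induction rule: rtrancl_induct)
  case base then show ?case by simp
next
  case (step b' b)
  show ?case
  proof (cases "b' \<in> C")
    case True then show ?thesis using step by blast
  next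
    case False
    then obtain c u where "c \<in> C" "u \<notin> C" "(c,u) \<in> A" "(u,b') \<in> (Aout A C)\<^sup>*" using step by blast
    moreover have "(b',b) \<in> Aout A C" using False step unfolding Aout_def by auto
    ultimately show ?thesis by (meson rtrancl.rtrancl_into_rtrancl)
  qed
qed

lemma enter_arc:
  assumes "(a,b) \<in> A\<^sup>*" "a \<notin> C" "b \<in> C"
  shows "\<exists>u c. (a,u) \<in> (Aout A C)\<^sup>* \<and> u \<notin> C \<and> c \<in> C \<and> (u,c) \<in> A"
  using assms
proof (induction rule: converse_rtrancl_induct)
  case base then show ?case by simp
next
  case (step a a')
  show ?case
  proof (cases "a' \<in> C")
    case True then show ?thesis using step by blast
  next
    case False
    then obtain u c where "(a',u) \<in> (Aout A C)\<^sup>*" "u \<notin> C" "c \<in> C" "(u,c) \<in> A" using step by blast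
    moreover have "(a,a') \<in> Aout A C" using False step unfolding Aout_def by auto
    ultimately show ?thesis by (meson converse_rtrancl_into_rtrancl)
  qed
qed

lemma Aout_rtrancl: "(a,b) \<in> (Aout A C)\<^sup>* \<Longrightarrow> (a,b) \<in> A\<^sup>*"
  by (induction rule: rtrancl_induct) (auto simp: Aout_def intro: rtrancl_into_rtrancl)

lemma grow:
  assumes LT: "\<forall>x u v. (u,x)\<in>A \<longrightarrow> (v,x)\<in>A \<longrightarrow> u\<noteq>v \<longrightarrow> (u,v)\<in>A \<or> (v,u)\<in>A"
    and cy: "cyc A C" and xC: "x \<in> set C" and yC: "y \<notin> set C"
    and xy: "(x,y) \<in> A\<^sup>*" and yx: "(y,x) \<in> A\<^sup>*"
  shows "\<exists>C'. cyc A C' \<and> set C \<subset> set C'"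
proof -
  let ?C = "set C"
  obtain c u where cu: "c \<in> ?C" "u \<notin> ?C" "(c,u) \<in> A" "(u,y) \<in> (Aout A ?C)\<^sup>*"
    using exit_arc[OF xy xC yC] by blast
  have "(u,x) \<in> A\<^sup>*" using Aout_rtrancl[OF cu(4)] yx by simp
  then obtain u' c' where uc: "(u,u') \<in> (Aout A ?C)\<^sup>*" "u' \<notin> ?C" "c' \<in> ?C" "(u',c') \<in> A"
    using enter_arc[of u x A ?C] cu(2) xC by blast
  obtain us where us: "us \<noteq> []" "hd us = u" "last us = u'" "distinct us"
    "successively (\<lambda>p q. (p,q) \<in> Aout A ?C) us" "set us \<subseteq> insert u (snd ` Aout A ?C)"
    using rtrancl_path[OF uc(1)] by blast
  have dis: "set us \<inter> ?C = {}" using us(6) cu(2) unfolding Aout_def by auto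
  have sus: "successively (\<lambda>p q. (p,q) \<in> A) us" using us(5)
    by (rule successively_mono) (auto simp: Aout_def)
  obtain zs where zs: "cyc A zs" "set zs = ?C" "last zs = c" using cyc_rot_last[OF cy cu(1)] by blast
  obtain j where j: "j < length zs" "zs ! j = c'" using uc(3) zs(2) by (metis in_set_conv_nth)
  obtain C' where C': "cyc A C'" "set zs \<union> set us \<subseteq> set C'"
    using ear[where A=A and us=us and j=j and zs=zs, OF LT, OF refl] zs j us dis sus cu(3) uc(4) by auto
  have "u \<in> set C'" "u \<notin> ?C" using C' us cu(2) by (auto simp: hd_in_set)
  then show ?thesis using C' zs by auto
qed

lemma cyc_start:
  assumes "(x,y) \<in> A\<^sup>*" "(y,x) \<in> A\<^sup>*" "x \<noteq> y"
  shows "\<exists>C. cyc A C \<and> x \<in> set C"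
proof -
  have "(x,y) \<in> A\<^sup>+" using assms(1,3) rtranclD by metis
  then obtain w where w: "(x,w) \<in> A" "(w,y) \<in> A\<^sup>*" using tranclD by metis
  then have wx: "(w,x) \<in> A\<^sup>*" using assms(2) by simp
  then obtain ps where ps: "ps \<noteq> []" "hd ps = w" "last ps = x" "distinct ps"
    "successively (\<lambda>p q. (p,q) \<in> A) ps" using rtrancl_path[OF wx] by blast
  then have "cyc A ps" using w unfolding cyc_def by simp
  moreover have "x \<in> set ps" using ps by (metis last_in_set)
  ultimately show ?thesis by blast
qed

lemma common_cycle:
  assumes LT: "\<forall>x u v. (u,x)\<in>A \<longrightarrow> (v,x)\<in>A \<longrightarrow> u\<noteq>v \<longrightarrow> (u,v)\<in>A \<or> (v,u)\<in>A"
    and fin: "finite V" and AV: "A \<subseteq> V \<times> V"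
    and xy: "(x,y) \<in> A\<^sup>*" and yx: "(y,x) \<in> A\<^sup>*" and ne: "x \<noteq> y"
  shows "\<exists>C. cyc A C \<and> x \<in> set C \<and> y \<in> set C"
proof -
  have main: "\<And>C. card V - card (set C) = m \<Longrightarrow> cyc A C \<Longrightarrow> x \<in> set C \<Longrightarrow> \<exists>C. cyc A C \<and> x \<in> set C \<and> y \<in> set C" for m
  proof (induction m rule: less_induct)
    case (less m)
    show ?case
    proof (cases "y \<in> set (C)")
      case True then show ?thesis using less.prems by blast
    next
      case False
      then obtain C' where C': "cyc A C'" "set C \<subset> set C'"
        using grow[where A=A and C=C and x=x and y=y, OF LT less.prems(2,3) False xy yx] by blast
      have "set C' \<subseteq> V" using cyc_subset[OF C'(1) AV] .
      then have "card (set C) < card (set C')" "card (set C') \<le> card V"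
        using C'(2) fin psubset_card_mono[of "set C'" "set C"] card_mono[of V "set C'"] by auto
      then have "card V - card (set C') < m" using less.prems(1) by linarith
      then show ?thesis using less.IH[of "card V - card (set C')" C'] C' less.prems(3) by auto
    qed
  qed
  obtain C where "cyc A C" "x \<in> set C" using cyc_start[OF xy yx ne] by blast
  then show ?thesis using main by blast
qed

lemma cycle_path:
  assumes c: "cyc A zs" and hd: "hd zs = x" and y: "y \<in> set zs" and ne: "x \<noteq> y"
  shows "\<exists>ps. dpath A ps \<and> hd ps = x \<and> last ps = y \<and>
           card (obs_open AH rho ps) \<le> card (obs_closed AH rho zs)"
proof -
  have d: "dcycle A zs" using c dcycle_cyc by auto
  let ?n = "length zs"
  have zne: "zs \<noteq> []" using c unfolding cyc_def by auto
  obtain j where j: "j < ?n" "zs ! j = y" using y by (metis in_set_conv_nth)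
  have j0: "j \<noteq> 0" using j hd ne zne by (metis hd_conv_nth)
  let ?ps = "take (Suc j) zs"
  have arcs: "\<forall>i. Suc i < length ?ps \<longrightarrow> (?ps ! i, ?ps ! Suc i) \<in> A"
  proof (intro allI impI)
    fix i assume i: "Suc i < length ?ps"
    then have "Suc i \<le> j" "i < ?n" using j by auto
    then have "(zs ! i, zs ! ((i+1) mod ?n)) \<in> A" using d unfolding dcycle_def by auto
    then show "(?ps ! i, ?ps ! Suc i) \<in> A" using i j by auto
  qed
  have dp: "dpath A ?ps" unfolding dpath_def using arcs d unfolding dcycle_def by auto
  have h: "hd ?ps = x" using hd zne by (simp add: hd_take)
  have l: "last ?ps = y" using j by (simp add: take_Suc_conv_app_nth)
  have sub: "obs_open AH rho ?ps \<subseteq> obs_closed AH rho zs"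
  proof
    fix i assume "i \<in> obs_open AH rho ?ps"
    then have i: "1 \<le> i" "Suc i < length ?ps"
      and ob: "(rho (?ps ! (i - 1), ?ps ! i), rho (?ps ! i, ?ps ! Suc i)) \<notin> AH"
      unfolding obs_open_def by auto
    have ij: "Suc i \<le> j" using i j by auto
    have ee: "i + ?n - 1 = (i - 1) + ?n" using i by arith
    have lt: "i - 1 < ?n" using ij j by arith
    have e0: "((i - 1) + ?n) mod ?n = i - 1" using lt mod_add_self2 mod_less by metis
    have e1: "(i + ?n - 1) mod ?n = i - 1" using ee e0 by metis
    have e2: "(i + 1) mod ?n = Suc i" using ij j by auto
    have "(rho (zs ! (i - 1), zs ! i), rho (zs ! i, zs ! Suc i)) \<notin> AH" using ob i by auto
    then show "i \<in> obs_closed AH rho zs" unfolding obs_closed_def Let_def using e1 e2 ij j by auto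
  qed
  have "finite (obs_closed AH rho zs)" unfolding obs_closed_def Let_def by auto
  then have "card (obs_open AH rho ?ps) \<le> card (obs_closed AH rho zs)" using sub by (rule card_mono)
  then show ?thesis using dp h l by blast
qed

lemma kernel_abs:
  assumes fin: "finite W"
    and RQ: "\<And>x y. R x y \<Longrightarrow> (x,y) \<in> Q"
    and tr: "trans Q" and rf: "\<And>x. (x,x) \<in> Q"
    and mut: "\<And>x y. x \<in> W \<Longrightarrow> y \<in> W \<Longrightarrow> x \<noteq> y \<Longrightarrow> (x,y) \<in> Q \<Longrightarrow> (y,x) \<in> Q \<Longrightarrow> R x y"
  shows "\<exists>S \<subseteq> W. (\<forall>u\<in>S. \<forall>v\<in>S. u \<noteq> v \<longrightarrow> \<not> R u v) \<and> (\<forall>x \<in> W - S. \<exists>s\<in>S. R x s)"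
  using fin mut
proof (induction W rule: finite_psubset_induct)
  case (psubset W)
  show ?case
  proof (cases "W = {}")
    case True then show ?thesis by auto
  next
    case False
    define f where "f s = card {w \<in> W. (s,w) \<in> Q}" for s
    have "Min (f ` W) \<in> f ` W" using False psubset.hyps(1) by simp
    then obtain s where s1: "s \<in> W" "f s = Min (f ` W)" by auto
    have s2: "\<forall>w\<in>W. f s \<le> f w" using s1(2) psubset.hyps(1) by simp
    note s = s1(1) s2
    have smax: "(w,s) \<in> Q" if "w \<in> W" "(s,w) \<in> Q" for w
    proof (rule ccontr)
      assume nws: "(w,s) \<notin> Q"
      have "{v \<in> W. (w,v) \<in> Q} \<subset> {v \<in> W. (s,v) \<in> Q}"
      proof
        show "{v \<in> W. (w,v) \<in> Q} \<subseteq> {v \<in> W. (s,v) \<in> Q}" using that tr unfolding trans_def by blast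
        show "{v \<in> W. (w,v) \<in> Q} \<noteq> {v \<in> W. (s,v) \<in> Q}" using nws s(1) rf by blast
      qed
      then have "f w < f s" unfolding f_def using psubset.hyps(1) by (simp add: psubset_card_mono)
      then show False using s(2) that(1) by fastforce
    qed
    define W' where "W' = W - {s} - {x \<in> W. R x s}"
    have W'W: "W' \<subset> W" unfolding W'_def using s(1) by auto
    obtain S' where S': "S' \<subseteq> W'" "\<forall>u\<in>S'. \<forall>v\<in>S'. u \<noteq> v \<longrightarrow> \<not> R u v" "\<forall>x \<in> W' - S'. \<exists>s\<in>S'. R x s"
      using psubset.IH[OF W'W] psubset.prems W'W by blast
    let ?S = "insert s S'"
    have "?S \<subseteq> W" using S'(1) W'W s(1) by auto
    moreover have "\<forall>u\<in>?S. \<forall>v\<in>?S. u \<noteq> v \<longrightarrow> \<not> R u v"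
    proof (intro ballI impI)
      fix u v assume u: "u \<in> ?S" and v: "v \<in> ?S" and uv: "u \<noteq> v"
      show "\<not> R u v"
      proof
        assume r: "R u v"
        show False
        proof (cases "u = s")
          case True
          then have vS: "v \<in> S'" using v uv by auto
          then have vW: "v \<in> W" "v \<noteq> s" "\<not> R v s" using S'(1) W'_def by auto
          have "(s,v) \<in> Q" using RQ r True by auto
          then have "(v,s) \<in> Q" using smax vW by auto
          then have "R v s" using psubset.prems vW s(1) \<open>(s,v) \<in> Q\<close> by auto
          then show False using vW by auto
        next
          case False
          then have uS: "u \<in> S'" using u by auto
          show False
          proof (cases "v = s")
            case True then show False using uS S'(1) W'_def r by auto
          next
            case False then show False using uS v S'(2) uv r by auto
          qed
        qed
      qed
    qed
    moreover have "\<forall>x \<in> W - ?S. \<exists>t\<in>?S. R x t"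
    proof
      fix x assume x: "x \<in> W - ?S"
      show "\<exists>t\<in>?S. R x t"
      proof (cases "x \<in> W'")
        case True then show ?thesis using S'(3) x by auto
      next
        case False then show ?thesis using x W'_def by auto
      qed
    qed
    ultimately show ?thesis by blast
  qed
qed

theorem theorem27:
  fixes k :: nat and V :: "'a set" and A :: "('a \<times> 'a) set"
    and VH :: "'b set" and AH :: "('b \<times> 'b) set" and rho :: "'a \<times> 'a \<Rightarrow> 'b"
  assumes "k \<ge> 2"
    and "digraph V A" and "loopless A"
    and "digraph VH AH"
    and "H_colouring A VH rho"
    and "local_in_tournament V A"
    and "\<forall>xs. dcycle A xs \<longrightarrow> H_length_closed AH rho xs \<le> k - 2"
  shows "\<exists>S. kH_kernel k V A AH rho S"
proof -
  have fin: "finite V" and AV: "A \<subseteq> V \<times> V" using assms(2) unfolding digraph_def by auto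
  have LTI: "\<forall>x\<in>V. \<forall>u\<in>in_nbrs A x. \<forall>v\<in>in_nbrs A x. u \<noteq> v \<longrightarrow> ((u, v) \<in> A \<longleftrightarrow> (v, u) \<notin> A)"
    using assms(6) unfolding local_in_tournament_def .
  have LT: "\<forall>x u v. (u,x)\<in>A \<longrightarrow> (v,x)\<in>A \<longrightarrow> u\<noteq>v \<longrightarrow> (u,v)\<in>A \<or> (v,u)\<in>A"
  proof (intro allI impI)
    fix x u v assume a: "(u,x)\<in>A" "(v,x)\<in>A" "u\<noteq>v"
    have xV: "x \<in> V" using AV a(1) by auto
    have ui: "u \<in> in_nbrs A x" and vi: "v \<in> in_nbrs A x" using a unfolding in_nbrs_def by auto
    have "(u, v) \<in> A \<longleftrightarrow> (v, u) \<notin> A" using LTI xV ui vi a(3) by blast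
    then show "(u,v)\<in>A \<or> (v,u)\<in>A" by blast
  qed
  define R where "R x y \<longleftrightarrow> (\<exists>ps. dpath A ps \<and> hd ps = x \<and> last ps = y \<and> H_length_open AH rho ps \<le> k - 1)" for x y
  have RQ: "(x,y) \<in> A\<^sup>*" if r: "R x y" for x y
  proof -
    obtain ps where ps: "dpath A ps" "hd ps = x" "last ps = y" using r unfolding R_def by blast
    have s1: "successively (\<lambda>a b. (a,b) \<in> A) ps" using ps(1) unfolding dpath_def successively_conv_nth by blast
    have "ps \<noteq> []" using ps(1) unfolding dpath_def by blast
    note s1 this
    then have "(hd ps, last ps) \<in> A\<^sup>*" by (rule succ_rtrancl)
    then show ?thesis using ps by simp
  qed
  have mut: "R x y" if th: "x \<in> V" "y \<in> V" "x \<noteq> y" "(x,y) \<in> A\<^sup>*" "(y,x) \<in> A\<^sup>*" for x y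
  proof -
    obtain C where C: "cyc A C" "x \<in> set C" "y \<in> set C"
      using common_cycle[OF LT fin AV th(4,5,3)] by blast
    obtain zs where zs: "cyc A zs" "set zs = set C" "hd zs = x" using cyc_rot_hd[OF C(1,2)] by blast
    obtain ps where ps: "dpath A ps" "hd ps = x" "last ps = y"
       "card (obs_open AH rho ps) \<le> card (obs_closed AH rho zs)"
      using cycle_path[OF zs(1,3), of y AH rho] zs(2) C(3) th(3) by auto
    have "card (obs_closed AH rho zs) \<le> k - 2" using assms(7) zs(1) dcycle_cyc
      unfolding H_length_closed_def by blast
    then have "H_length_open AH rho ps \<le> k - 1" using ps(4) assms(1) unfolding H_length_open_def by linarith
    then show ?thesis unfolding R_def using ps by blast
  qed
  obtain S where S: "S \<subseteq> V" "\<forall>u\<in>S. \<forall>v\<in>S. u \<noteq> v \<longrightarrow> \<not> R u v" "\<forall>x \<in> V - S. \<exists>s\<in>S. R x s"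
    using kernel_abs[where W=V and R=R and Q="A\<^sup>*", OF fin RQ trans_rtrancl rtrancl_refl mut] by blast
  have "kH_kernel k V A AH rho S"
    unfolding kH_kernel_def
  proof (intro conjI)
    show "S \<subseteq> V" by fact
    show "\<forall>u\<in>S. \<forall>v\<in>S. u \<noteq> v \<longrightarrow> (\<forall>xs. dpath A xs \<and> hd xs = u \<and> last xs = v \<longrightarrow> k \<le> H_length_open AH rho xs)"
    proof (intro ballI impI allI)
      fix u v xs assume u: "u \<in> S" "v \<in> S" "u \<noteq> v" and xs: "dpath A xs \<and> hd xs = u \<and> last xs = v"
      show "k \<le> H_length_open AH rho xs"
      proof (rule ccontr)
        assume "\<not> k \<le> H_length_open AH rho xs"
        then have "R u v" unfolding R_def using xs by (intro exI[of _ xs]) auto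
        then show False using S(2) u by blast
      qed
    qed
    show "\<forall>x\<in>V - S. \<exists>xs. dpath A xs \<and> hd xs = x \<and> last xs \<in> S \<and> H_length_open AH rho xs \<le> k - 1"
    proof
      fix x assume "x \<in> V - S"
      then obtain s where "s \<in> S" "R x s" using S(3) by blast
      then show "\<exists>xs. dpath A xs \<and> hd xs = x \<and> last xs \<in> S \<and> H_length_open AH rho xs \<le> k - 1"
        unfolding R_def by blast
    qed
  qed
  then show ?thesis by blast
qed

end
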